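(* Let $W$ satisfy the mixing assumptions in the context, and consider Algorithm DDS-F (described in the context) with all poll directions unit vectors and a forcing function $\rho:\mathbb{R}^+\to\mathbb{R}^+$, where the stepsizes $\alpha_i^{(k)}$ admit sequences $\{\alpha^{(k)}_{\min}\}$, $\{\alpha^{(k)}_{\max}\}$ such that (i) $\alpha^{(k)}_{\min}\le\alpha^{(k)}_i\le\alpha^{(k)}_{\max}$ for all $i,k$; (ii) $\sum_k(\alpha^{(k)}_{\max})^2<\infty$; (iii) $\sum_k\rho(\alpha^{(k)}_{\min})=\infty$. Then the iterates $\mathbf{x}^{(k)}=[x_1^{(k)};\dots;x_m^{(k)}]\in\mathbb{R}^{mn}$ satisfy $$\lim_{k\to\infty}\left\|\mathbf{x}^{(k)}-\widehat W\mathbf{x}^{(k)}\right\|=0.$$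
   Context: Setting: $m$ agents on an undirected connected graph $\mathcal{G}=(\{1,\dots,m\},\mathcal{E})$; $\mathcal{N}_i=\{j\neq i:(i,j)\in\mathcal{E}\}$. Mixing assumptions on $W=[w_{ij}]\in\mathbb{R}^{m\times m}$ with eigenvalues $\lambda_1(W)\ge\dots\ge\lambda_m(W)$: $W$ symmetric with nonnegative entries, $w_{ij}>0$ iff $i=j$ or $j\in\mathcal{N}_i$; $\lambda_1(W)=1$, $\lambda_2(W)<1$; $W\mathbf{1}=\mathbf{1}$; $-1<\lambda_m(W)\le0$. $\widehat W=W\otimes I_n$. Algorithm DDS-F (local functions $f_i:\mathbb{R}^n\to\mathbb{R}$, poll sets $D_i^{(k)}\subset\mathbb{R}^n$, stepsizes $\alpha_i^{(k)}>0$): start from $x_1^{(0)}=\dots=x_m^{(0)}$. At iteration $k$, each agent $i$ checks whether some $d\in D^{(k)}_i$ satisfies $f_i(x_i^{(k)}+\alpha_i^{(k)}d)\le f_i(x_i^{(k)})-\rho(\alpha_i^{(k)})$. If so, $x_i^{(k+1)}=\sum_{j\in\mathcal{N}_i\cup\{i\}}w_{ij}x_j^{(k)}+\alpha_i^{(k)}d$; otherwise $x_i^{(k+1)}=\sum_{j\in\mathcal{N}_i\cup\{i\}}w_{ij}x_j^{(k)}$. *)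

theory Defs
  imports "HOL-Analysis.Analysis" "Jordan_Normal_Form.Char_Poly"
begin

text \<open>For a real symmetric matrix the
  characteristic polynomial splits over the reals, so this list has length m and
  its (i-1)-th entry is lambda_i(W).\<close>
definition eigs_desc :: "real mat \<Rightarrow> real list" where
  "eigs_desc W = rev (sorted_list_of_multiset (proots (char_poly W)))"

text \<open>Mixing assumptions on W w.r.t. the undirected graph with edge set E on the
  vertices 0..m-1 (agent i of the paper is index i-1 here).\<close>
definition neighbors :: "(nat \<times> nat) set \<Rightarrow> nat \<Rightarrow> nat set" where
  "neighbors E i = {j. j \<noteq> i \<and> (i, j) \<in> E}"

definition undirected_connected_graph :: "nat \<Rightarrow> (nat \<times> nat) set \<Rightarrow> bool" where
  "undirected_connected_graph m E \<longleftrightarrow> 1 \<le> m \<and> E \<subseteq> {..<m} \<times> {..<m} \<and> sym E \<and>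
     (\<forall>i<m. \<forall>j<m. (i, j) \<in> E\<^sup>*)"

definition mixing_assumptions :: "nat \<Rightarrow> (nat \<times> nat) set \<Rightarrow> real mat \<Rightarrow> bool" where
  "mixing_assumptions m E W \<longleftrightarrow>
     W \<in> carrier_mat m m \<and> W = transpose_mat W \<and>
     (\<forall>i<m. \<forall>j<m. 0 \<le> W $$ (i, j)) \<and>
     (\<forall>i<m. \<forall>j<m. 0 < W $$ (i, j) \<longleftrightarrow> (i = j \<or> j \<in> neighbors E i)) \<and>
     eigs_desc W ! 0 = 1 \<and> eigs_desc W ! 1 < 1 \<and>
     (\<forall>i<m. (\<Sum>j<m. W $$ (i, j)) = 1) \<and>
     -1 < eigs_desc W ! (m - 1) \<and> eigs_desc W ! (m - 1) \<le> 0"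

definition forcing_function :: "(real \<Rightarrow> real) \<Rightarrow> bool" where
  "forcing_function \<rho> \<longleftrightarrow> (\<forall>t>0. 0 < \<rho> t) \<and> mono_on {0<..} \<rho> \<and>
     ((\<lambda>t. \<rho> t / t) \<longlongrightarrow> 0) (at_right 0)"

text \<open>Consensus step: sum over j in N_i u {i} of w_ij x_j (equivalently over all j<m,
  since w_ij = 0 off the graph).\<close>
definition mix :: "nat \<Rightarrow> (nat \<times> nat) set \<Rightarrow> real mat \<Rightarrow> (nat \<Rightarrow> real ^ 'n) \<Rightarrow> nat \<Rightarrow> real ^ 'n" where
  "mix m E W y i = (\<Sum>j\<in>insert i (neighbors E i). W $$ (i, j) *\<^sub>R y j)"

text \<open>The DDS-F iteration. x k i is agent i's iterate at iteration k; f i, D k i, alpha k i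
  are the local function, poll set and stepsize.\<close>
definition DDS_F :: "nat \<Rightarrow> (nat \<times> nat) set \<Rightarrow> real mat \<Rightarrow> (nat \<Rightarrow> real ^ 'n \<Rightarrow> real) \<Rightarrow>
    (nat \<Rightarrow> nat \<Rightarrow> (real ^ 'n) set) \<Rightarrow> (nat \<Rightarrow> nat \<Rightarrow> real) \<Rightarrow> (real \<Rightarrow> real) \<Rightarrow>
    (nat \<Rightarrow> nat \<Rightarrow> real ^ 'n) \<Rightarrow> bool" where
  "DDS_F m E W f D \<alpha> \<rho> x \<longleftrightarrow>
     (\<forall>i<m. \<forall>j<m. x 0 i = x 0 j) \<and>
     (\<forall>k. \<forall>i<m.
        (if (\<exists>d\<in>D k i. f i (x k i + \<alpha> k i *\<^sub>R d) \<le> f i (x k i) - \<rho> (\<alpha> k i))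
         then (\<exists>d\<in>D k i. f i (x k i + \<alpha> k i *\<^sub>R d) \<le> f i (x k i) - \<rho> (\<alpha> k i) \<and>
                 x (Suc k) i = mix m E W (x k) i + \<alpha> k i *\<^sub>R d)
         else x (Suc k) i = mix m E W (x k) i))"

text \<open>Euclidean norm of x - (W kron I_n) x for the stacked vector x = [x_1; ...; x_m].\<close>
definition consensus_err :: "nat \<Rightarrow> real mat \<Rightarrow> (nat \<Rightarrow> real ^ 'n) \<Rightarrow> real" where
  "consensus_err m W y = sqrt (\<Sum>i<m. (norm (y i - (\<Sum>j<m. W $$ (i, j) *\<^sub>R y j)))\<^sup>2)"

end

theory Submission
  imports Defs
begin


lemma seq_contract:
  fixes s b :: "nat \<Rightarrow> real" and q :: real and N :: nat
  assumes s0: "\<forall>k. 0 \<le> s k" and rec: "\<forall>k. s (k + N) \<le> q * s k + b k"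
    and b0: "b \<longlonglongrightarrow> 0" and q0: "0 \<le> q" and q1: "q < 1" and N0: "0 < N"
  shows "s \<longlonglongrightarrow> 0"
proof (rule LIMSEQ_I)
  fix r :: real assume r: "0 < r"
  define e where "e = r / 2"
  have e: "0 < e" using r by (simp add: e_def)
  have "0 < e * (1 - q)" using e q1 by simp
  then have "\<forall>\<^sub>F k in sequentially. norm (b k - 0) < e * (1 - q)"
    using b0 by (simp add: tendsto_iff dist_norm)
  then obtain K where K0: "\<forall>k\<ge>K. \<bar>b k\<bar> < e * (1 - q)"
    by (auto simp: eventually_sequentially)
  have K: "b k \<le> e * (1 - q)" if "k \<ge> K" for k using K0 that by force
  have step: "s (k + N) - e \<le> q * (s k - e)" if "k \<ge> K" for k
  proof -
    have h: "s (k + N) \<le> q * s k + e * (1 - q)" using rec K[OF that] by (meson add_left_mono order_trans)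
    have "q * (s k - e) = q * s k + e * (1 - q) - e" by (simp add: algebra_simps)
    then show ?thesis using h by linarith
  qed
  have iter: "s (k + j * N) - e \<le> q ^ j * (s k - e)" if "k \<ge> K" for k j
  proof (induction j)
    case 0 then show ?case by simp
  next
    case (Suc j)
    have "s (k + Suc j * N) - e = s ((k + j * N) + N) - e" by (simp add: algebra_simps)
    also have "\<dots> \<le> q * (s (k + j * N) - e)" using step that by simp
    also have "\<dots> \<le> q * (q ^ j * (s k - e))" using Suc q0 by (simp add: mult_left_mono)
    finally show ?case by (simp add: algebra_simps)
  qed
  define C where "C = Max ((\<lambda>r. s (K + r)) ` {..<N})"
  have C: "s (K + i) \<le> C" if "i < N" for i
    unfolding C_def using that by (intro Max_ge) auto
  have "(\<lambda>j. q ^ j * C) \<longlonglongrightarrow> 0"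
    using q0 q1 by (intro tendsto_mult_left_zero LIMSEQ_power_zero) auto
  then have "\<forall>\<^sub>F j in sequentially. norm (q ^ j * C - 0) < e"
    using e by (simp add: tendsto_iff dist_norm)
  then obtain J where J0: "\<forall>j\<ge>J. \<bar>q ^ j * C\<bar> < e"
    by (auto simp: eventually_sequentially)
  have J: "q ^ j * C < e" if "j \<ge> J" for j using J0 that by force
  show "\<exists>no. \<forall>n\<ge>no. norm (s n - 0) < r"
  proof (intro exI allI impI)
    fix n assume n: "n \<ge> K + J * N"
    define j where "j = (n - K) div N"
    define i where "i = (n - K) mod N"
    have Kn: "K \<le> n" using n by simp
    have ni: "n = (K + i) + j * N" using div_mult_mod_eq[of "n - K" N] Kn unfolding i_def j_def
      by linarith
    have iN: "i < N" using N0 by (simp add: i_def)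
    have "J * N \<le> n - K" using n by simp
    then have jJ: "j \<ge> J" unfolding j_def using div_le_mono[of "J * N" "n - K" N] N0 by simp
    have "s n - e \<le> q ^ j * (s (K + i) - e)" using iter[of "K + i" j] ni by simp
    also have "\<dots> \<le> q ^ j * C" using C[OF iN] e q0 by (intro mult_left_mono) auto
    also have "\<dots> \<le> q ^ J * C"
    proof -
      have "0 \<le> C" using C[OF iN] s0 by (meson order_trans)
      moreover have "q ^ j \<le> q ^ J" using q0 q1 jJ by (intro power_decreasing) auto
      ultimately show ?thesis by (intro mult_right_mono)
    qed
    also have "\<dots> < e" using J by simp
    finally show "norm (s n - 0) < r" using s0 e_def by simp
  qed
qed



locale stoch =
  fixes m :: nat and W :: "real mat"
  assumes m_pos: "1 \<le> m"
    and nonneg: "\<forall>i<m. \<forall>j<m. 0 \<le> W $$ (i, j)"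
    and rows: "\<forall>i<m. (\<Sum>j<m. W $$ (i, j)) = 1"
begin

definition Lop :: "(nat \<Rightarrow> real) \<Rightarrow> nat \<Rightarrow> real" where
  "Lop y i = (\<Sum>j<m. W $$ (i, j) * y j)"
definition mx :: "(nat \<Rightarrow> real) \<Rightarrow> real" where "mx y = Max (y ` {..<m})"
definition mn :: "(nat \<Rightarrow> real) \<Rightarrow> real" where "mn y = Min (y ` {..<m})"
definition spr :: "(nat \<Rightarrow> real) \<Rightarrow> real" where "spr y = mx y - mn y"

lemma ne: "{..<m} \<noteq> {}"
proof -
  have "0 \<in> {..<m}" using m_pos by simp
  then show ?thesis by blast
qed

lemma mx_ge: "i < m \<Longrightarrow> y i \<le> mx y"
  unfolding mx_def by (intro Max_ge) auto
lemma mn_le: "i < m \<Longrightarrow> mn y \<le> y i"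
  unfolding mn_def by (intro Min_le) auto
lemma mx_in: "\<exists>i<m. mx y = y i"
proof -
  have "Max (y ` {..<m}) \<in> y ` {..<m}" using ne by (intro Max_in) auto
  then show ?thesis unfolding mx_def by auto
qed
lemma mn_in: "\<exists>i<m. mn y = y i"
proof -
  have "Min (y ` {..<m}) \<in> y ` {..<m}" using ne by (intro Min_in) auto
  then show ?thesis unfolding mn_def by auto
qed
lemma spr_nonneg: "0 \<le> spr y"
  using mx_ge[of 0 y] mn_le[of 0 y] m_pos by (simp add: spr_def)
lemma spr_le: "(\<And>i l. i < m \<Longrightarrow> l < m \<Longrightarrow> y i - y l \<le> B) \<Longrightarrow> spr y \<le> B"
  using mx_in[of y] mn_in[of y] unfolding spr_def by auto
lemma spr_ge: "i < m \<Longrightarrow> l < m \<Longrightarrow> y i - y l \<le> spr y"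
  using mx_ge[of i y] mn_le[of l y] unfolding spr_def by auto

lemma Lop_le_mx: "i < m \<Longrightarrow> Lop y i \<le> mx y"
proof -
  assume i: "i < m"
  have "Lop y i \<le> (\<Sum>j<m. W $$ (i, j) * mx y)"
    unfolding Lop_def using i nonneg mx_ge by (intro sum_mono mult_left_mono) auto
  also have "\<dots> = mx y" using rows i by (simp add: sum_distrib_right[symmetric])
  finally show ?thesis .
qed
lemma Lop_ge_mn: "i < m \<Longrightarrow> mn y \<le> Lop y i"
proof -
  assume i: "i < m"
  have "mn y = (\<Sum>j<m. W $$ (i, j) * mn y)" using rows i by (simp add: sum_distrib_right[symmetric])
  also have "\<dots> \<le> Lop y i"
    unfolding Lop_def using i nonneg mn_le by (intro sum_mono mult_left_mono) auto
  finally show ?thesis .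
qed
lemma Lop_abs: "i < m \<Longrightarrow> (\<And>j. j < m \<Longrightarrow> \<bar>y j\<bar> \<le> B) \<Longrightarrow> \<bar>Lop y i\<bar> \<le> B"
proof -
  assume i: "i < m" and B: "\<And>j. j < m \<Longrightarrow> \<bar>y j\<bar> \<le> B"
  have "\<bar>Lop y i\<bar> \<le> (\<Sum>j<m. \<bar>W $$ (i, j) * y j\<bar>)" unfolding Lop_def by (rule sum_abs)
  also have "\<dots> \<le> (\<Sum>j<m. W $$ (i, j) * B)"
    using i nonneg B by (intro sum_mono) (auto simp: abs_mult intro: mult_left_mono)
  also have "\<dots> = B" using rows i by (simp add: sum_distrib_right[symmetric])
  finally show ?thesis .
qed
lemma Lop_diff: "Lop y i - Lop z i = Lop (\<lambda>j. y j - z j) i"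
  by (simp add: Lop_def sum_subtractf[symmetric] right_diff_distrib)

lemma self_gap: "i < m \<Longrightarrow> \<bar>y i - Lop y i\<bar> \<le> spr y"
  using Lop_le_mx[of i y] Lop_ge_mn[of i y] mx_ge[of i y] mn_le[of i y]
  unfolding spr_def by auto

fun Pw :: "nat \<Rightarrow> nat \<Rightarrow> nat \<Rightarrow> real" where
  "Pw 0 i j = (if i = j then 1 else 0)"
| "Pw (Suc t) i j = (\<Sum>l<m. W $$ (i, l) * Pw t l j)"

lemma Pw_nonneg: "i < m \<Longrightarrow> j < m \<Longrightarrow> 0 \<le> Pw t i j"
  by (induction t arbitrary: i) (auto intro!: sum_nonneg simp: nonneg)

lemma Pw_rows: "i < m \<Longrightarrow> (\<Sum>j<m. Pw t i j) = 1"
proof (induction t arbitrary: i)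
  case 0 then show ?case by (simp add: sum.delta)
next
  case (Suc t)
  have "(\<Sum>j<m. Pw (Suc t) i j) = (\<Sum>l<m. W $$ (i, l) * (\<Sum>j<m. Pw t l j))"
    by (simp add: sum_distrib_left) (rule sum.swap)
  also have "\<dots> = (\<Sum>l<m. W $$ (i, l))" using Suc.IH by simp
  finally show ?case using rows Suc.prems by simp
qed

lemma Lpow: "i < m \<Longrightarrow> (Lop ^^ t) y i = (\<Sum>j<m. Pw t i j * y j)"
proof (induction t arbitrary: i)
  case 0
  have "(\<Sum>j<m. Pw 0 i j * y j) = (\<Sum>j<m. if i = j then y j else 0)"
    by (intro sum.cong) auto
  then show ?case using 0 by (simp add: sum.delta)
next
  case (Suc t)
  have "(Lop ^^ Suc t) y i = (\<Sum>l<m. W $$ (i, l) * (Lop ^^ t) y l)"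
    by (simp add: Lop_def)
  also have "\<dots> = (\<Sum>l<m. W $$ (i, l) * (\<Sum>j<m. Pw t l j * y j))"
    using Suc.IH by (intro sum.cong) auto
  also have "\<dots> = (\<Sum>j<m. Pw (Suc t) i j * y j)"
    by (simp add: sum_distrib_left sum_distrib_right mult.assoc) (rule sum.swap)
  finally show ?case .
qed

lemma dobrushin:
  fixes \<epsilon> :: real
  assumes eps: "\<And>i j. i < m \<Longrightarrow> j < m \<Longrightarrow> \<epsilon> \<le> Pw N i j"
  shows "spr ((Lop ^^ N) y) \<le> (1 - m * \<epsilon>) * spr y"
proof (rule spr_le)
  fix i l assume i: "i < m" and l: "l < m"
  have up: "(Lop ^^ N) y i \<le> (1 - m * \<epsilon>) * mx y + \<epsilon> * (\<Sum>j<m. y j)"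
  proof -
    have "(Lop ^^ N) y i = (\<Sum>j<m. (Pw N i j - \<epsilon>) * y j) + \<epsilon> * (\<Sum>j<m. y j)"
      using i by (simp add: Lpow left_diff_distrib sum_subtractf sum_distrib_left)
    also have "(\<Sum>j<m. (Pw N i j - \<epsilon>) * y j) \<le> (\<Sum>j<m. (Pw N i j - \<epsilon>) * mx y)"
      using eps i mx_ge by (intro sum_mono mult_left_mono) auto
    also have "\<dots> = (1 - m * \<epsilon>) * mx y"
      using Pw_rows[OF i] by (simp add: sum_distrib_right[symmetric] sum_subtractf)
    finally show ?thesis by simp
  qed
  have lo: "(1 - m * \<epsilon>) * mn y + \<epsilon> * (\<Sum>j<m. y j) \<le> (Lop ^^ N) y l"
  proof -
    have "(1 - m * \<epsilon>) * mn y = (\<Sum>j<m. (Pw N l j - \<epsilon>) * mn y)"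
      using Pw_rows[OF l] by (simp add: sum_distrib_right[symmetric] sum_subtractf)
    also have "\<dots> \<le> (\<Sum>j<m. (Pw N l j - \<epsilon>) * y j)"
      using eps l mn_le by (intro sum_mono mult_left_mono) auto
    also have "\<dots> + \<epsilon> * (\<Sum>j<m. y j) = (Lop ^^ N) y l"
      using l by (simp add: Lpow left_diff_distrib sum_subtractf sum_distrib_left)
    finally show ?thesis by simp
  qed
  show "(Lop ^^ N) y i - (Lop ^^ N) y l \<le> (1 - m * \<epsilon>) * spr y"
    using up lo by (simp add: spr_def algebra_simps)
qed

lemma pert:
  assumes a: "\<And>k i. i < m \<Longrightarrow> \<bar>X (Suc k) i - Lop (X k) i\<bar> \<le> a k"
  shows "i < m \<Longrightarrow> \<bar>X (k + t) i - (Lop ^^ t) (X k) i\<bar> \<le> (\<Sum>s<t. a (k + s))"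
proof (induction t arbitrary: i)
  case 0 then show ?case by simp
next
  case (Suc t)
  have eq: "X (k + Suc t) i - (Lop ^^ Suc t) (X k) i =
     (X (Suc (k + t)) i - Lop (X (k + t)) i) + Lop (\<lambda>j. X (k + t) j - (Lop ^^ t) (X k) j) i"
    by (simp add: Lop_diff[symmetric])
  have "\<bar>Lop (\<lambda>j. X (k + t) j - (Lop ^^ t) (X k) j) i\<bar> \<le> (\<Sum>s<t. a (k + s))"
    using Suc by (intro Lop_abs) auto
  then show ?case using a[OF Suc.prems, of "k + t"] unfolding eq by simp
qed

lemma conv:
  fixes \<epsilon> :: real
  assumes a: "\<And>k i. i < m \<Longrightarrow> \<bar>X (Suc k) i - Lop (X k) i\<bar> \<le> a k"
    and a0: "a \<longlonglongrightarrow> 0"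
    and N0: "0 < N" and e0: "0 < \<epsilon>" and eps: "\<And>i j. i < m \<Longrightarrow> j < m \<Longrightarrow> \<epsilon> \<le> Pw N i j"
  shows "(\<lambda>k. spr (X k)) \<longlonglongrightarrow> 0"
proof (rule seq_contract)
  define q where "q = 1 - m * \<epsilon>"
  show "\<forall>k. 0 \<le> spr (X k)" by (simp add: spr_nonneg)
  have "m * \<epsilon> \<le> (\<Sum>j<m. Pw N 0 j)"
    using eps[of 0] m_pos sum_mono[of "{..<m}" "\<lambda>_. \<epsilon>" "Pw N 0"] by auto
  then show "0 \<le> q" using Pw_rows[of 0 N] m_pos by (simp add: q_def)
  show "q < 1" using m_pos e0 by (simp add: q_def)
  show "0 < N" by fact
  show "(\<lambda>k. 2 * (\<Sum>s<N. a (k + s))) \<longlonglongrightarrow> 0"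
  proof -
    have "(\<lambda>k. a (k + s)) \<longlonglongrightarrow> 0" for s
      using a0 by (rule LIMSEQ_ignore_initial_segment)
    then have "(\<lambda>k. \<Sum>s<N. a (k + s)) \<longlonglongrightarrow> (\<Sum>s<N. 0)"
      by (intro tendsto_sum) auto
    then show ?thesis using tendsto_mult_right_zero by simp
  qed
  show "\<forall>k. spr (X (k + N)) \<le> q * spr (X k) + 2 * (\<Sum>s<N. a (k + s))"
  proof
    fix k
    let ?Y = "(Lop ^^ N) (X k)" and ?B = "\<Sum>s<N. a (k + s)"
    have P: "\<And>i. i < m \<Longrightarrow> \<bar>X (k + N) i - ?Y i\<bar> \<le> ?B" using pert[where X=X and a=a, OF a] by blast
    show "spr (X (k + N)) \<le> q * spr (X k) + 2 * ?B"
    proof (rule spr_le)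
      fix i l assume i: "i < m" and l: "l < m"
      have "?Y i - ?Y l \<le> spr ?Y" using spr_ge i l by blast
      also have "\<dots> \<le> q * spr (X k)" unfolding q_def by (rule dobrushin[OF eps])
      finally show "X (k + N) i - X (k + N) l \<le> q * spr (X k) + 2 * ?B"
        using P[OF i] P[OF l] by linarith
    qed
  qed
qed

end



theorem theorem2:
  fixes m :: nat and E :: "(nat \<times> nat) set" and W :: "real mat"
    and f :: "nat \<Rightarrow> real ^ 'n \<Rightarrow> real" and D :: "nat \<Rightarrow> nat \<Rightarrow> (real ^ 'n) set"
    and \<alpha> :: "nat \<Rightarrow> nat \<Rightarrow> real" and \<rho> :: "real \<Rightarrow> real"
    and x :: "nat \<Rightarrow> nat \<Rightarrow> real ^ 'n"
    and \<alpha>min \<alpha>max :: "nat \<Rightarrow> real"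
  assumes graph: "undirected_connected_graph m E"
    and mixing: "mixing_assumptions m E W"
    and forcing: "forcing_function \<rho>"
    and unit_dirs: "\<forall>k. \<forall>i<m. \<forall>d\<in>D k i. norm d = 1"
    and step_pos: "\<forall>k. \<forall>i<m. 0 < \<alpha> k i"
    and iter: "DDS_F m E W f D \<alpha> \<rho> x"
    and amin_pos: "\<forall>k. 0 < \<alpha>min k"
    and bounds: "\<forall>k. \<forall>i<m. \<alpha>min k \<le> \<alpha> k i \<and> \<alpha> k i \<le> \<alpha>max k"
    and sq_summable: "summable (\<lambda>k. (\<alpha>max k)\<^sup>2)"
    and rho_divergent: "\<not> summable (\<lambda>k. \<rho> (\<alpha>min k))"
  shows "(\<lambda>k. consensus_err m W (x k)) \<longlonglongrightarrow> 0"
proof -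
  have m1: "1 \<le> m" and Esub: "E \<subseteq> {..<m} \<times> {..<m}" and conn: "\<forall>i<m. \<forall>j<m. (i, j) \<in> E\<^sup>*"
    using graph unfolding undirected_connected_graph_def by auto
  have nonneg: "\<forall>i<m. \<forall>j<m. 0 \<le> W $$ (i, j)"
    and pos: "\<forall>i<m. \<forall>j<m. 0 < W $$ (i, j) \<longleftrightarrow> (i = j \<or> j \<in> neighbors E i)"
    and rows: "\<forall>i<m. (\<Sum>j<m. W $$ (i, j)) = 1"
    using mixing unfolding mixing_assumptions_def by auto
  interpret S: stoch m W using m1 nonneg rows by unfold_locales auto

  have mix_eq: "mix m E W y i = (\<Sum>j<m. W $$ (i, j) *\<^sub>R y j)" if i: "i < m" for y :: "nat \<Rightarrow> real ^ 'n" and i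
    unfolding mix_def
  proof (rule sum.mono_neutral_left)
    show "finite {..<m}" by simp
    show "insert i (neighbors E i) \<subseteq> {..<m}" using i Esub by (auto simp: neighbors_def)
    show "\<forall>j\<in>{..<m} - insert i (neighbors E i). W $$ (i, j) *\<^sub>R y j = 0"
    proof
      fix j assume j: "j \<in> {..<m} - insert i (neighbors E i)"
      then have "\<not> 0 < W $$ (i, j)" "0 \<le> W $$ (i, j)" using pos nonneg i by auto
      then show "W $$ (i, j) *\<^sub>R y j = 0" by simp
    qed
  qed

  have stepv: "\<exists>v. norm v \<le> \<alpha>max k \<and> x (Suc k) i = mix m E W (x k) i + v" if i: "i < m" for k i
  proof -
    have bd: "\<alpha>min k \<le> \<alpha> k i" "\<alpha> k i \<le> \<alpha>max k" using bounds i by auto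
    have it: "if (\<exists>d\<in>D k i. f i (x k i + \<alpha> k i *\<^sub>R d) \<le> f i (x k i) - \<rho> (\<alpha> k i))
         then (\<exists>d\<in>D k i. f i (x k i + \<alpha> k i *\<^sub>R d) \<le> f i (x k i) - \<rho> (\<alpha> k i) \<and>
                 x (Suc k) i = mix m E W (x k) i + \<alpha> k i *\<^sub>R d)
         else x (Suc k) i = mix m E W (x k) i"
      using iter i unfolding DDS_F_def by blast
    show ?thesis
    proof (cases "\<exists>d\<in>D k i. f i (x k i + \<alpha> k i *\<^sub>R d) \<le> f i (x k i) - \<rho> (\<alpha> k i)")
      case True
      then obtain d where d: "d \<in> D k i" "x (Suc k) i = mix m E W (x k) i + \<alpha> k i *\<^sub>R d"
        using it by auto
      have "norm d = 1" using unit_dirs i d by auto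
      moreover have "0 < \<alpha> k i" using step_pos i by blast
      ultimately have "norm (\<alpha> k i *\<^sub>R d) \<le> \<alpha>max k" using bd by simp
      then show ?thesis using d by blast
    next
      case False
      then have "x (Suc k) i = mix m E W (x k) i + 0" using it by simp
      moreover have "norm (0::real^'n) \<le> \<alpha>max k" using bd amin_pos by (smt (verit) norm_zero)
      ultimately show ?thesis by blast
    qed
  qed

  define X where "X c k i = x k i $ c" for c k i
  have Xstep: "\<bar>X c (Suc k) i - S.Lop (X c k) i\<bar> \<le> \<alpha>max k" if i: "i < m" for c k i
  proof -
    obtain v where v: "norm v \<le> \<alpha>max k" "x (Suc k) i = mix m E W (x k) i + v"
      using stepv[OF i] by blast
    have "mix m E W (x k) i $ c = S.Lop (X c k) i"
      using i by (simp add: mix_eq sum_component S.Lop_def X_def)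
    then have "X c (Suc k) i - S.Lop (X c k) i = v $ c" using v(2) by (simp add: X_def)
    then show ?thesis using component_le_norm_cart[of v c] v(1) by simp
  qed

  have amax0: "\<alpha>max \<longlonglongrightarrow> 0"
  proof -
    have "(\<lambda>k. (\<alpha>max k)\<^sup>2) \<longlonglongrightarrow> 0" using sq_summable by (rule summable_LIMSEQ_zero)
    then have "(\<lambda>k. sqrt ((\<alpha>max k)\<^sup>2)) \<longlonglongrightarrow> sqrt 0" by (rule tendsto_real_sqrt)
    moreover have "sqrt ((\<alpha>max k)\<^sup>2) = \<alpha>max k" for k
    proof -
      have "0 < \<alpha>min k" using amin_pos by simp
      moreover have "\<alpha>min k \<le> \<alpha> k 0" "\<alpha> k 0 \<le> \<alpha>max k" using bounds m1 by auto
      ultimately show ?thesis by simp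
    qed
    ultimately show ?thesis by simp
  qed

  have Pmono: "0 < S.Pw (Suc t) i j" if "i < m" "j < m" "0 < S.Pw t i j" for t i j
  proof -
    have "W $$ (i, i) * S.Pw t i j \<le> (\<Sum>l<m. W $$ (i, l) * S.Pw t l j)"
      using that nonneg S.Pw_nonneg
      by (intro member_le_sum) (auto intro: mult_nonneg_nonneg)
    moreover have "0 < W $$ (i, i)" using pos that by auto
    moreover have "0 < W $$ (i, i) * S.Pw t i j" using calculation(2) that(3) by simp
    ultimately show ?thesis by simp
  qed
  have Pmono2: "0 < S.Pw (t + d) i j" if "i < m" "j < m" "0 < S.Pw t i j" for t d i j
    using that
  proof (induction d)
    case 0 then show ?case by simp
  next
    case (Suc d)
    then have "0 < S.Pw (Suc (t + d)) i j" by (intro Pmono) auto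
    then show ?case by simp
  qed
  have reach: "a < m \<longrightarrow> (\<exists>t. 0 < S.Pw t a j)" if "(a, j) \<in> E\<^sup>*" "j < m" for a j
    using that(1)
  proof (induction rule: converse_rtrancl_induct)
    case base
    then show ?case by (intro impI exI[of _ 0]) simp
  next
    case (step y z)
    have yz: "y < m" "z < m" using step(1) Esub by auto
    then obtain t where t: "0 < S.Pw t z j" using step(3) by auto
    have Wyz: "0 < W $$ (y, z)"
      using pos yz step(1) by (cases "y = z") (auto simp: neighbors_def)
    have "W $$ (y, z) * S.Pw t z j \<le> (\<Sum>l<m. W $$ (y, l) * S.Pw t l j)"
      using yz nonneg S.Pw_nonneg that(2)
      by (intro member_le_sum) (auto intro: mult_nonneg_nonneg)
    moreover have "0 < W $$ (y, z) * S.Pw t z j" using Wyz t by simp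
    ultimately have "0 < S.Pw (Suc t) y j" by simp
    then show ?case by blast
  qed
  have "\<forall>i<m. \<forall>j<m. \<exists>t. 0 < S.Pw t i j" using reach conn by blast
  then obtain T where T: "\<And>i j. i < m \<Longrightarrow> j < m \<Longrightarrow> 0 < S.Pw (T i j) i j" by metis
  define N where "N = Suc (\<Sum>i<m. \<Sum>j<m. T i j)"
  have PN: "0 < S.Pw N i j" if "i < m" "j < m" for i j
  proof -
    have "T i j \<le> (\<Sum>j<m. T i j)" using that by (intro member_le_sum) auto
    also have "\<dots> \<le> (\<Sum>i<m. \<Sum>j<m. T i j)"
      using that by (intro member_le_sum[of i "{..<m}" "\<lambda>i. \<Sum>j<m. T i j"]) auto
    finally have "N = T i j + (N - T i j)" unfolding N_def by simp
    then show ?thesis using Pmono2[OF that T[OF that], of "N - T i j"] by simp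
  qed
  define \<epsilon> where "\<epsilon> = Min ((\<lambda>p. S.Pw N (fst p) (snd p)) ` ({..<m} \<times> {..<m}))"
  have e0: "0 < \<epsilon>" unfolding \<epsilon>_def using S.ne PN
    by (subst Min_gr_iff) auto
  have eps: "\<epsilon> \<le> S.Pw N i j" if "i < m" "j < m" for i j
  proof -
    have "(i, j) \<in> {..<m} \<times> {..<m}" using that by simp
    then have "S.Pw N i j \<in> (\<lambda>p. S.Pw N (fst p) (snd p)) ` ({..<m} \<times> {..<m})"
      by (metis (no_types, lifting) fst_conv snd_conv image_eqI)
    then show ?thesis unfolding \<epsilon>_def by (intro Min_le) auto
  qed

  have sprc: "(\<lambda>k. S.spr (X c k)) \<longlonglongrightarrow> 0" for c
    by (rule S.conv[of "X c" \<alpha>max N \<epsilon>]) (use Xstep amax0 e0 eps in \<open>auto simp: N_def\<close>)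
  define Sk where "Sk k = (\<Sum>c\<in>UNIV. S.spr (X c k))" for k
  have Sk0: "Sk \<longlonglongrightarrow> 0"
    unfolding Sk_def using tendsto_sum[of UNIV "\<lambda>c k. S.spr (X c k)" "\<lambda>_. 0" sequentially] sprc
    by simp
  have Sknn: "0 \<le> Sk k" for k unfolding Sk_def by (intro sum_nonneg) (simp add: S.spr_nonneg)
  have bound: "consensus_err m W (x k) \<le> sqrt (real m) * Sk k" for k
  proof -
    have t: "(norm (x k i - (\<Sum>j<m. W $$ (i, j) *\<^sub>R x k j)))\<^sup>2 \<le> (Sk k)\<^sup>2" if i: "i < m" for i
    proof -
      have "norm (x k i - (\<Sum>j<m. W $$ (i, j) *\<^sub>R x k j))
          \<le> (\<Sum>c\<in>UNIV. \<bar>(x k i - (\<Sum>j<m. W $$ (i, j) *\<^sub>R x k j)) $ c\<bar>)"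
        by (rule norm_le_l1_cart)
      also have "\<dots> = (\<Sum>c\<in>UNIV. \<bar>X c k i - S.Lop (X c k) i\<bar>)"
        by (simp add: sum_component S.Lop_def X_def)
      also have "\<dots> \<le> Sk k" unfolding Sk_def using i by (intro sum_mono S.self_gap)
      finally show ?thesis by (intro power_mono) auto
    qed
    have "(\<Sum>i<m. (norm (x k i - (\<Sum>j<m. W $$ (i, j) *\<^sub>R x k j)))\<^sup>2) \<le> (\<Sum>i<m. (Sk k)\<^sup>2)"
      using t by (intro sum_mono) auto
    also have "\<dots> = (sqrt (real m) * Sk k)\<^sup>2" by (simp add: power_mult_distrib)
    finally have "consensus_err m W (x k) \<le> sqrt ((sqrt (real m) * Sk k)\<^sup>2)"
      unfolding consensus_err_def by (rule real_sqrt_le_mono)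
    also have "\<dots> = sqrt (real m) * Sk k" using Sknn by simp
    finally show ?thesis .
  qed
  have lim: "(\<lambda>k. sqrt (real m) * Sk k) \<longlonglongrightarrow> 0"
    using tendsto_mult_right_zero[OF Sk0] by simp
  have nn: "0 \<le> consensus_err m W (x k)" for k
    unfolding consensus_err_def by (rule real_sqrt_ge_zero, rule sum_nonneg) simp
  have e1: "\<forall>\<^sub>F k in sequentially. 0 \<le> consensus_err m W (x k)"
    by (intro always_eventually allI nn)
  have e2: "\<forall>\<^sub>F k in sequentially. consensus_err m W (x k) \<le> sqrt (real m) * Sk k"
    by (intro always_eventually allI bound)
  show ?thesis using tendsto_sandwich[OF e1 e2 tendsto_const lim] .
qed


end
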